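(* Fix a state-action pair $(s,a)$. Let $\nu(\cdot\mid s,a)$ be a probability distribution on $\mathbb{R}$ with finite second moment and quantile function $F_\nu^{-1}(\cdot\mid s,a)$. Let $g:[0,1]\to\mathbb{R}$ be a source map (the identity or an affine map), and let $v_\theta(t,z\mid s,a,\tau)$ be a scalar velocity field, $t\in[0,1]$, $z\in\mathbb{R}$, $\tau\in[0,1]$. For each $\tau\in[0,1]$ let $t\mapsto z_t^\theta$ be the solution of $\frac{d}{dt}z_t^\theta=v_\theta(t,z_t^\theta\mid s,a,\tau)$ with $z_0^\theta=g(\tau)$, and set $$T_\theta(\tau\mid s,a)=z_1^\theta=g(\tau)+\int_0^1 v_\theta(t,z_t^\theta\mid s,a,\tau)\,dt .$$ Assume $\tau\mapsto T_\theta(\tau\mid s,a)$ is nondecreasing (so that it is the quantile function of $\eta_\theta(\cdot\mid s,a):=(T_\theta(\cdot\mid s,a))_\#\mathrm{Unif}[0,1]$), and that all quantities below are square integrable. Define $u^\star(\tau\mid s,a)=F_\nu^{-1}(\tau\mid s,a)-g(\tau)$ and the (population, monotone-coupled) FlowIQN loss $$\mathcal{L}_{\mathrm{FlowIQN}}(\theta;s,a)=\mathbb{E}_{\tau\sim\mathrm{Unif}[0,1],\,t\sim\mathrm{Unif}[0,1]}\Big[\big|v_\theta(t,z_t^\theta\mid s,a,\tau)-u^\star(\tau\mid s,a)\big|^2\Big].$$ Then $$W_2^2\big(\eta_\theta(\cdot\mid s,a),\nu(\cdot\mid s,a)\big)\le \mathcal{L}_{\mathrm{FlowIQN}}(\t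heta;s,a).$$
   Context: $W_2$ denotes the 2-Wasserstein distance on probability measures on $\mathbb{R}$ with finite second moments; in one dimension $W_2^2(\mu,\nu)=\int_0^1|F_\mu^{-1}(\tau)-F_\nu^{-1}(\tau)|^2\,d\tau$, where $F^{-1}$ are quantile functions. Here $\nu(\cdot\mid s,a)$ plays the role of the Bellman target return distribution at $(s,a)$, and $\eta_\theta(\cdot\mid s,a)$ the return distribution induced by the flow critic. The monotone (quantile) coupling pairs source quantile level $\tau$ with target quantile $F_\nu^{-1}(\tau\mid s,a)$, along the straight path $(1-t)g(\tau)+tF_\nu^{-1}(\tau\mid s,a)$ whose constant velocity is $u^\star$. *)

theory Defs
  imports "HOL-Probability.Probability"
begin

definition unif01 :: "real measure" where
  "unif01 = uniform_measure lborel {0..1}"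

text \<open>Quantile function (generalized inverse of the CDF), used for levels in (0,1).\<close>
definition quantile :: "real measure \<Rightarrow> real \<Rightarrow> real" where
  "quantile \<mu> \<tau> = Inf {x. \<tau> \<le> cdf \<mu> x}"

text \<open>Squared 2-Wasserstein distance on the real line via the quantile formula.\<close>
definition W2sq :: "real measure \<Rightarrow> real measure \<Rightarrow> ennreal" where
  "W2sq \<mu> \<nu> = (\<integral>\<^sup>+ \<tau>. ennreal ((quantile \<mu> \<tau> - quantile \<nu> \<tau>)\<^sup>2) * indicator {0<..<1} \<tau> \<partial>lborel)"

end

theory Submission
  imports Defs
begin


lemma unif01_prob: "prob_space unif01"
  unfolding unif01_def by (rule prob_space_uniform_measure) auto

lemma unif01_sets[simp]: "sets unif01 = sets borel"
  unfolding unif01_def by simp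

lemma unif01_space[simp]: "space unif01 = UNIV"
  unfolding unif01_def by simp

lemma unif01_nn:
  assumes [measurable]: "f \<in> borel_measurable borel"
  shows "(\<integral>\<^sup>+x. f x \<partial>unif01) = (\<integral>\<^sup>+x. f x * indicator {0..1} x \<partial>lborel)"
  unfolding unif01_def
  by (subst nn_integral_uniform_measure) (auto simp: divide_ennreal_def)

lemma quantile_meas:
  assumes "real_distribution \<nu>"
  shows "quantile \<nu> \<in> borel_measurable borel"
proof -
  interpret real_distribution \<nu> by fact
  have mono: "mono_on {0<..<1} (quantile \<nu>)"
  proof (rule mono_onI)
    fix a b :: real assume ab: "a \<in> {0<..<1}" "b \<in> {0<..<1}" "a \<le> b"
    have "\<forall>\<^sub>F x in at_top. cdf \<nu> x > b"
      using cdf_lim_at_top_prob ab by (intro order_tendstoD) auto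
    then obtain x where "cdf \<nu> x > b" by (metis eventually_at_top_linorder order_refl)
    then have ne: "{x. b \<le> cdf \<nu> x} \<noteq> {}" using less_imp_le by blast
    have "\<forall>\<^sub>F x in at_bot. cdf \<nu> x < a"
      using cdf_lim_at_bot ab by (intro order_tendstoD) auto
    then obtain y where y: "cdf \<nu> y < a" by (metis eventually_at_bot_linorder order_refl)
    have bdd: "bdd_below {x. a \<le> cdf \<nu> x}"
    proof (rule bdd_belowI)
      fix x assume "x \<in> {x. a \<le> cdf \<nu> x}"
      then show "y \<le> x" using y cdf_nondecreasing[of x y] by (cases "x \<le> y") auto
    qed
    show "quantile \<nu> a \<le> quantile \<nu> b"
      unfolding quantile_def
      by (rule cInf_superset_mono[OF ne bdd]) (use ab in auto)
  qed
  have r: "quantile \<nu> \<in> borel_measurable (restrict_space borel {0<..<1})"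
    by (rule borel_measurable_mono_on_fnc[OF mono])
  have Q0: "\<And>t. t \<le> 0 \<Longrightarrow> quantile \<nu> t = quantile \<nu> 0"
  proof -
    fix t :: real assume "t \<le> 0"
    then have "{x. t \<le> cdf \<nu> x} = UNIV" "{x. 0 \<le> cdf \<nu> x} = UNIV"
      using cdf_nonneg by (force intro: order_trans)+
    then show "quantile \<nu> t = quantile \<nu> 0" unfolding quantile_def by simp
  qed
  have Q2: "\<And>t. t > 1 \<Longrightarrow> quantile \<nu> t = quantile \<nu> 2"
  proof -
    fix t :: real assume t1: "t > 1"
    have e: "{x. s \<le> cdf \<nu> x} = {}" if "s > 1" for s
    proof -
      { fix x have "cdf \<nu> x \<le> 1" by (rule cdf_bounded_prob)
        then have "\<not> s \<le> cdf \<nu> x" using that by linarith }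
      then show ?thesis by blast
    qed
    show "quantile \<nu> t = quantile \<nu> 2" unfolding quantile_def using e[of t] e[of 2] t1 by simp
  qed
  have eq: "quantile \<nu> = (\<lambda>t. if t \<in> {0<..<1} then quantile \<nu> t else
      (if t \<le> 0 then quantile \<nu> 0 else if t = 1 then quantile \<nu> 1 else quantile \<nu> 2))"
  proof
    fix t :: real
    consider "t \<in> {0<..<1}" | "t \<le> 0" | "t = 1" | "t > 1" by force
    then show "quantile \<nu> t = (if t \<in> {0<..<1} then quantile \<nu> t else
      (if t \<le> 0 then quantile \<nu> 0 else if t = 1 then quantile \<nu> 1 else quantile \<nu> 2))"
    proof cases
      case 1 then show ?thesis by simp
    next
      case 2 then show ?thesis using Q0[of t] by simp
    next
      case 3 then show ?thesis by simp
    next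
      case 4 then show ?thesis using Q2[of t] by simp
    qed
  qed
  have m1: "(\<lambda>t. if t \<in> {0<..<1} then quantile \<nu> t else 0) \<in> borel_measurable borel"
    using r by (subst measurable_restrict_space_iff[symmetric]) auto
  have "(\<lambda>t. (if t \<in> {0<..<1} then quantile \<nu> t else 0) +
      (if t \<in> {0<..<1} then 0 else
      (if t \<le> 0 then quantile \<nu> 0 else if t = 1 then quantile \<nu> 1 else quantile \<nu> 2)))
      \<in> borel_measurable borel"
    using m1 by measurable
  also have "(\<lambda>t. (if t \<in> {0<..<1} then quantile \<nu> t else 0) +
      (if t \<in> {0<..<1} then 0 else
      (if t \<le> 0 then quantile \<nu> 0 else if t = 1 then quantile \<nu> 1 else quantile \<nu> 2))) = quantile \<nu>"
    by (subst (3) eq) auto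
  finally show ?thesis .
qed


lemma quantile_push:
  fixes T :: "real \<Rightarrow> real"
  assumes mono: "mono_on {0..1} T" and Tm[measurable]: "T \<in> borel_measurable borel"
    and \<tau>: "\<tau> \<in> {0<..<1}" and cont: "isCont T \<tau>"
  shows "quantile (distr unif01 borel T) \<tau> = T \<tau>"
proof -
  define B where "B x = {\<sigma>. T \<sigma> \<le> x} \<inter> {0..1}" for x
  have Bsets: "B x \<in> sets lborel" for x unfolding B_def by measurable
  have Bf: "B x \<in> fmeasurable lborel" for x
    by (rule fmeasurableI2[of "{0..1}"]) (auto simp: B_def fmeasurable_def Bsets[unfolded B_def])
  have cdfeq: "cdf (distr unif01 borel T) x = measure lborel (B x)" for x
  proof -
    have "cdf (distr unif01 borel T) x = measure unif01 (T -` {..x})"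
      unfolding cdf_def by (subst measure_distr) (auto simp: unif01_def)
    also have "\<dots> = measure lborel ({0..1} \<inter> T -` {..x}) / measure lborel {0..1::real}"
      unfolding unif01_def using measurable_sets[OF Tm, of "{..x}"] by (subst measure_uniform_measure) auto
    also have "\<dots> = measure lborel (B x)"
      by (simp add: B_def Int_commute vimage_def)
    finally show ?thesis .
  qed
  have ge: "\<tau> \<le> cdf (distr unif01 borel T) x" if "T \<tau> \<le> x" for x
  proof -
    have "{0..\<tau>} \<subseteq> B x"
    proof
      fix s assume s: "s \<in> {0..\<tau>}"
      then have "T s \<le> T \<tau>" using \<tau> by (intro mono_onD[OF mono]) auto
      then show "s \<in> B x" using s \<tau> that by (auto simp: B_def)
    qed
    then have "measure lborel {0..\<tau>} \<le> measure lborel (B x)"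
      by (intro measure_mono_fmeasurable Bf) auto
    then show ?thesis using \<tau> cdfeq by simp
  qed
  have lt: "cdf (distr unif01 borel T) x < \<tau>" if x: "x < T \<tau>" for x
  proof -
    obtain \<delta> where \<delta>: "\<delta> > 0" "\<And>\<sigma>. dist \<sigma> \<tau> < \<delta> \<Longrightarrow> dist (T \<sigma>) (T \<tau>) < T \<tau> - x"
      using cont x unfolding continuous_at_eps_delta by (metis diff_gt_0_iff_gt)
    define \<epsilon> where "\<epsilon> = min (\<delta>/2) \<tau>"
    have \<epsilon>: "\<epsilon> > 0" "\<epsilon> \<le> \<tau>" "\<epsilon> < \<delta>" using \<delta> \<tau> by (auto simp: \<epsilon>_def)
    have "B x \<subseteq> {0..\<tau>-\<epsilon>}"
    proof
      fix \<sigma> assume s: "\<sigma> \<in> B x"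
      then have s01: "\<sigma> \<in> {0..1}" and Ts: "T \<sigma> \<le> x" by (auto simp: B_def)
      have "\<sigma> \<le> \<tau> - \<epsilon>"
      proof (rule ccontr)
        assume "\<not> \<sigma> \<le> \<tau> - \<epsilon>"
        show False
        proof (cases "\<sigma> \<ge> \<tau>")
          case True
          then have "T \<tau> \<le> T \<sigma>" using mono s01 \<tau> by (auto intro: mono_onD)
          then show False using Ts x by linarith
        next
          case False
          then have "dist \<sigma> \<tau> < \<delta>" using \<open>\<not> \<sigma> \<le> \<tau> - \<epsilon>\<close> \<epsilon> by (auto simp: dist_real_def)
          then have "dist (T \<sigma>) (T \<tau>) < T \<tau> - x" by (rule \<delta>(2))
          then show False using Ts by (auto simp: dist_real_def)
        qed
      qed
      then show "\<sigma> \<in> {0..\<tau>-\<epsilon>}" using s01 by auto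
    qed
    then have "measure lborel (B x) \<le> measure lborel {0..\<tau>-\<epsilon>}"
      using \<epsilon> by (intro measure_mono_fmeasurable Bsets) (auto simp: fmeasurable_def)
    then show ?thesis using \<epsilon> cdfeq by simp
  qed
  have "Inf {x. \<tau> \<le> cdf (distr unif01 borel T) x} = T \<tau>"
  proof (rule cInf_eq_minimum)
    show "T \<tau> \<in> {x. \<tau> \<le> cdf (distr unif01 borel T) x}" using ge by simp
    fix x assume "x \<in> {x. \<tau> \<le> cdf (distr unif01 borel T) x}"
    then show "T \<tau> \<le> x" using lt by (meson mem_Collect_eq not_le)
  qed
  then show ?thesis unfolding quantile_def .
qed


lemma jensen_hk:
  fixes f :: "real \<Rightarrow> real"
  assumes fm[measurable]: "f \<in> borel_measurable borel" and fi: "(f has_integral c) {0..1}"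
  shows "ennreal (c\<^sup>2) \<le> (\<integral>\<^sup>+t. ennreal ((f t)\<^sup>2) \<partial>unif01)"
proof -
  have eq: "(\<integral>\<^sup>+t. ennreal ((f t)\<^sup>2) \<partial>unif01) = (\<integral>\<^sup>+t. ennreal ((f t)\<^sup>2) * indicator {0..1} t \<partial>lborel)"
    by (rule unif01_nn) measurable
  show ?thesis
  proof (cases "(\<integral>\<^sup>+t. ennreal ((f t)\<^sup>2) * indicator {0..1} t \<partial>lborel) = \<infinity>")
    case True
    then show ?thesis using eq by simp
  next
    case False
    then obtain r where r: "(\<integral>\<^sup>+t. ennreal ((f t)\<^sup>2) * indicator {0..1} t \<partial>lborel) = ennreal r" "0 \<le> r"
      by (cases "(\<integral>\<^sup>+t. ennreal ((f t)\<^sup>2) * indicator {0..1} t \<partial>lborel)") auto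
    define h where "h t = indicator {0..1} t * (f t)\<^sup>2" for t :: real
    have "(\<integral>\<^sup>+t. ennreal (h t) \<partial>lborel) = ennreal r"
      unfolding h_def using r(1)
      by (simp add: ennreal_mult' ennreal_indicator mult.commute)
    moreover have "h \<in> borel_measurable borel" unfolding h_def by measurable
    ultimately have "(h has_integral r) UNIV"
      by (intro nn_integral_has_integral r) (auto simp: h_def)
    then have sq: "((\<lambda>t. (f t)\<^sup>2) has_integral r) {0..1}"
    proof -
      have "h = (\<lambda>x. if x \<in> {0..1} then (f x)\<^sup>2 else 0)" by (auto simp: h_def fun_eq_iff)
      then show ?thesis using \<open>(h has_integral r) UNIV\<close> has_integral_restrict_UNIV by metis
    qed
    have "((\<lambda>t. (f t)\<^sup>2 - 2 * c * f t + c\<^sup>2) has_integral (r - 2 * c * c + c\<^sup>2)) {0..1}"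
    proof (intro has_integral_add has_integral_diff sq has_integral_mult_right fi)
      show "((\<lambda>t. c\<^sup>2) has_integral c\<^sup>2) {0..1::real}"
        using has_integral_const_real[of "c\<^sup>2" 0 1] by simp
    qed
    then have "((\<lambda>t. (f t - c)\<^sup>2) has_integral (r - c\<^sup>2)) {0..1}"
      by (simp add: power2_eq_square algebra_simps)
    then have "0 \<le> r - c\<^sup>2" by (rule has_integral_nonneg) auto
    then show ?thesis using eq r by simp
  qed
qed


theorem proposition1:
  fixes \<nu> :: "real measure"
    and g :: "real \<Rightarrow> real"
    and v :: "real \<Rightarrow> real \<Rightarrow> real \<Rightarrow> real"
    and z :: "real \<Rightarrow> real \<Rightarrow> real"
  assumes nu_prob: "prob_space \<nu>"
    and nu_sets: "sets \<nu> = sets borel"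
    and nu_moment: "integrable \<nu> (\<lambda>x. x\<^sup>2)"
    and g_affine: "\<exists>\<alpha> \<beta>. \<forall>\<tau>. g \<tau> = \<alpha> * \<tau> + \<beta>"
    and ode: "\<And>\<tau>. \<tau> \<in> {0..1} \<Longrightarrow> z \<tau> 0 = g \<tau> \<and>
              (\<forall>t\<in>{0..1}. (z \<tau> has_vector_derivative v t (z \<tau> t) \<tau>) (at t within {0..1}))"
    and T_mono: "mono_on {0..1} (\<lambda>\<tau>. z \<tau> 1)"
    and T_meas: "(\<lambda>\<tau>. z \<tau> 1) \<in> borel_measurable borel"
    and T_sq: "integrable unif01 (\<lambda>\<tau>. (z \<tau> 1)\<^sup>2)"
    and v_meas: "(\<lambda>p. v (snd p) (z (fst p) (snd p)) (fst p)) \<in> borel_measurable (borel \<Otimes>\<^sub>M borel)"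
    and loss_sq: "integrable (unif01 \<Otimes>\<^sub>M unif01)
       (\<lambda>p. (v (snd p) (z (fst p) (snd p)) (fst p) - (quantile \<nu> (fst p) - g (fst p)))\<^sup>2)"
  shows "W2sq (distr unif01 borel (\<lambda>\<tau>. z \<tau> 1)) \<nu>
     \<le> (\<integral>\<^sup>+ p. ennreal ((v (snd p) (z (fst p) (snd p)) (fst p) - (quantile \<nu> (fst p) - g (fst p)))\<^sup>2)
          \<partial>(unif01 \<Otimes>\<^sub>M unif01))"
  proof -
  have rd: "real_distribution \<nu>"
    using nu_prob nu_sets by (simp add: real_distribution_def real_distribution_axioms_def)
  note Qm[measurable] = quantile_meas[OF rd]
  obtain \<alpha> \<beta> where gab: "\<And>\<tau>. g \<tau> = \<alpha> * \<tau> + \<beta>" using g_affine by blast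
  have gm[measurable]: "g \<in> borel_measurable borel"
  proof -
    have "(\<lambda>\<tau>::real. \<alpha> * \<tau> + \<beta>) \<in> borel_measurable borel" by measurable
    moreover have "g = (\<lambda>\<tau>. \<alpha> * \<tau> + \<beta>)" using gab by auto
    ultimately show ?thesis by simp
  qed
  note vm[measurable] = v_meas
  note Tm[measurable] = T_meas
  define T where "T = (\<lambda>\<tau>. z \<tau> 1)"
  define F where "F p = v (snd p) (z (fst p) (snd p)) (fst p) - (quantile \<nu> (fst p) - g (fst p))" for p
  have Fm[measurable]: "F \<in> borel_measurable (borel \<Otimes>\<^sub>M borel)"
    unfolding F_def by measurable
  have Fm2[measurable]: "(\<lambda>p. ennreal ((F p)\<^sup>2)) \<in> borel_measurable (unif01 \<Otimes>\<^sub>M unif01)"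
  proof -
    have "(\<lambda>p. ennreal ((F p)\<^sup>2)) \<in> borel_measurable (borel \<Otimes>\<^sub>M borel)" by measurable
    moreover have "(unif01 \<Otimes>\<^sub>M unif01 \<rightarrow>\<^sub>M (borel::ennreal measure)) = (borel \<Otimes>\<^sub>M borel \<rightarrow>\<^sub>M (borel::ennreal measure))"
      by (rule measurable_cong_sets[OF sets_pair_measure_cong[OF unif01_sets unif01_sets] refl])
    ultimately show ?thesis by (simp only:)
  qed
  interpret u: prob_space unif01 by (rule unif01_prob)
  interpret uu: pair_prob_space unif01 unif01 ..
  define D where "D = {a\<in>{0..1}. \<not> continuous (at a within {0..1}) T}"
  have Dc: "countable D" unfolding D_def
    by (rule mono_on_ctble_discont) (use T_mono in \<open>simp add: T_def\<close>)
  have AEq: "AE \<tau> in lborel. \<tau> \<in> {0<..<1} \<longrightarrow> quantile (distr unif01 borel T) \<tau> = T \<tau>"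
  proof (rule AE_I'[OF countable_imp_null_set_lborel[OF Dc]])
    show "{x \<in> space lborel. \<not> (x \<in> {0<..<1} \<longrightarrow> quantile (distr unif01 borel T) x = T x)} \<subseteq> D"
    proof (rule subsetI)
      fix x assume xx: "x \<in> {x \<in> space lborel. \<not> (x \<in> {0<..<1} \<longrightarrow> quantile (distr unif01 borel T) x = T x)}"
      then have x: "x \<in> {0<..<1}" and ne: "quantile (distr unif01 borel T) x \<noteq> T x" by auto
      show "x \<in> D"
      proof (rule ccontr)
        assume "x \<notin> D"
        then have "continuous (at x within {0..1}) T" using x by (auto simp: D_def)
        moreover have "at x within {0..1} = at x"
          using x by (intro at_within_interior) auto
        ultimately have "isCont T x" by simp
        then have "quantile (distr unif01 borel T) x = T x"
          using x T_mono by (intro quantile_push) (auto simp: T_def)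
        with ne show False by simp
      qed
    qed
  qed
  have pw: "ennreal ((T \<tau> - quantile \<nu> \<tau>)\<^sup>2) \<le> (\<integral>\<^sup>+t. ennreal ((F (\<tau>, t))\<^sup>2) \<partial>unif01)"
    if \<tau>: "\<tau> \<in> {0..1}" for \<tau>
  proof (rule jensen_hk)
    show "(\<lambda>t. F (\<tau>, t)) \<in> borel_measurable borel" by measurable
    have "((\<lambda>t. v t (z \<tau> t) \<tau>) has_integral (z \<tau> 1 - z \<tau> 0)) {0..1}"
      using ode[OF \<tau>] by (intro fundamental_theorem_of_calculus) auto
    then have "((\<lambda>t. v t (z \<tau> t) \<tau> - (quantile \<nu> \<tau> - g \<tau>)) has_integral
        (z \<tau> 1 - z \<tau> 0 - (quantile \<nu> \<tau> - g \<tau>))) {0..1}"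
    proof (rule has_integral_diff[OF _ ])
      show "((\<lambda>t::real. quantile \<nu> \<tau> - g \<tau>) has_integral (quantile \<nu> \<tau> - g \<tau>)) {0..1}"
        using has_integral_const_real[of "quantile \<nu> \<tau> - g \<tau>" 0 1] by simp
    qed
    then show "((\<lambda>t. F (\<tau>, t)) has_integral (T \<tau> - quantile \<nu> \<tau>)) {0..1}"
      using ode[OF \<tau>] by (simp add: F_def T_def)
  qed
  have "W2sq (distr unif01 borel T) \<nu> =
      (\<integral>\<^sup>+ \<tau>. ennreal ((T \<tau> - quantile \<nu> \<tau>)\<^sup>2) * indicator {0<..<1} \<tau> \<partial>lborel)"
    unfolding W2sq_def
  proof (rule nn_integral_cong_AE)
    show "AE \<tau> in lborel. ennreal ((quantile (distr unif01 borel T) \<tau> - quantile \<nu> \<tau>)\<^sup>2) * indicator {0<..<1} \<tau>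
       = ennreal ((T \<tau> - quantile \<nu> \<tau>)\<^sup>2) * indicator {0<..<1} \<tau>"
      using AEq by eventually_elim (simp add: indicator_def)
  qed
  also have "\<dots> \<le> (\<integral>\<^sup>+ \<tau>. (\<integral>\<^sup>+t. ennreal ((F (\<tau>, t))\<^sup>2) \<partial>unif01) * indicator {0..1} \<tau> \<partial>lborel)"
  proof (rule nn_integral_mono)
    fix \<tau> :: real
    show "ennreal ((T \<tau> - quantile \<nu> \<tau>)\<^sup>2) * indicator {0<..<1} \<tau>
       \<le> (\<integral>\<^sup>+t. ennreal ((F (\<tau>, t))\<^sup>2) \<partial>unif01) * indicator {0..1} \<tau>"
    proof (cases "\<tau> \<in> {0<..<1}")
      case True
      then have "\<tau> \<in> {0..1}" by auto
      then show ?thesis using True pw[of \<tau>] by (simp add: indicator_def)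
    next
      case False
      then have "indicator {0<..<1} \<tau> = (0::ennreal)" by (simp add: indicator_def)
      then show ?thesis by simp
    qed
  qed
  also have "\<dots> = (\<integral>\<^sup>+ \<tau>. (\<integral>\<^sup>+t. ennreal ((F (\<tau>, t))\<^sup>2) \<partial>unif01) \<partial>unif01)"
  proof (rule unif01_nn[symmetric])
    have Fm3: "(\<lambda>p. ennreal ((F p)\<^sup>2)) \<in> borel_measurable (borel \<Otimes>\<^sub>M unif01)"
    proof -
      have "(\<lambda>p. ennreal ((F p)\<^sup>2)) \<in> borel_measurable (borel \<Otimes>\<^sub>M borel)" by measurable
      moreover have "((borel::real measure) \<Otimes>\<^sub>M unif01 \<rightarrow>\<^sub>M (borel::ennreal measure)) = ((borel::real measure) \<Otimes>\<^sub>M (borel::real measure) \<rightarrow>\<^sub>M (borel::ennreal measure))"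
        by (rule measurable_cong_sets[OF sets_pair_measure_cong[OF refl unif01_sets] refl])
      ultimately show ?thesis by (simp only:)
    qed
    show "(\<lambda>\<tau>. \<integral>\<^sup>+t. ennreal ((F (\<tau>, t))\<^sup>2) \<partial>unif01) \<in> borel_measurable borel"
      using u.borel_measurable_nn_integral_fst[OF Fm3] by simp
  qed
  also have "\<dots> = (\<integral>\<^sup>+ p. ennreal ((F p)\<^sup>2) \<partial>(unif01 \<Otimes>\<^sub>M unif01))"
    using u.nn_integral_fst[OF Fm2] by simp
  finally show ?thesis by (simp only: F_def T_def)
qed

end
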